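(* Assume (FWW) for a flow $\Phi_t$ on $\mathbb{R}^n$ and a $k$-cone $C$. Let $K\subset\mathbb{R}^n$ be a compact invariant set with a $k$-exponential separation $\mathbb{R}^n=E_y\oplus F_y$ ($y\in K$) of $(\Phi_t,D\Phi_t)$ along $K$ associated with $C$, and let $x\in K$ be a regular point with $\lambda_{kx}\le0$. Then there exists an open neighborhood $\mathcal{V}$ of $x$ such that for every $y\in\mathcal{V}$ one of the following holds: (a) $\|\Phi_t(x)-\Phi_t(y)\|\to0$ as $t\to+\infty$; (b) there exists $T>0$ such that $\Phi_T(x)-\Phi_T(y)\in C$, and hence $\Phi_t(x)-\Phi_t(y)\in\operatorname{Int}C$ for all $t>T$.
   Context: A closed set $C\subset\mathbb{R}^n$ is a $k$-cone if $lv\in C$ for all $v\in C$, $l\in\mathbb{R}$, and the maximal dimension of a linear subspace contained in $C$ is $k$. $C$ is $k$-solid if there is a $k$-dimensional subspace $W$ with $W\setminus\{0\}\subset\operatorname{Int}C$. Write $x\sim y$ if $x-y\in C$ and $x\approx y$ if $x-y\in\operatorname{Int}C$. A flow $\Phi_t$ is strongly monotone with respect to a $k$-solid cone $C$ if $x\sim y$ implies $\Phi_t(x)\sim\Phi_t(y)$ for $t\ge0$, and $x\ne y$, $x\sim y$ imply $\Phi_t(x)\approx\Phi_t(y)$ for $t>0$. Assumption (FWW): the flow $\Phi_t$ on $\mathbb{R}^n$ is $C^{1,\alpha}$-smooth ($C^1$ with locally $\alpha$-Hölder derivative, $\alpha\in(0,1]$), strongly monotone with respect to the $k$-cone $C$,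 and $D_x\Phi_t(C\setminus\{0\})\subset\operatorname{Int}C$ for $t>0$. A $k$-exponential separation along a compact invariant set $K$ associated with $C$ consists of continuous (in the Grassmannian gap metric) families of $k$-dimensional subspaces $E_x$ and $(n-k)$-dimensional subspaces $F_x$, $x\in K$, such that: $\mathbb{R}^n=E_x\oplus F_x$; $D_x\Phi_tE_x=E_{\Phi_t(x)}$, $D_x\Phi_tF_x\subset F_{\Phi_t(x)}$ for $t>0$; there are $M>0$, $0<\gamma<1$ with $\|D_x\Phi_tw\|\le M\gamma^t\|D_x\Phi_tv\|$ for all $x\in K$, unit $w\in F_x$, unit $v\in E_x$, $t\ge0$; and $E_x\subset\operatorname{Int}C\cup\{0\}$, $F_x\cap C=\{0\}$. The $k$-Lyapunov exponent of $x\in K$ is $\lambda_{kx}=\limsup_{t\to+\infty}t^{-1}\log\inf_{v\in E_x,\|v\|=1}\|D_x\Phi_tv\|$; $x$ is regular if this limsup is a limit. *)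

theory Defs
  imports "HOL-Analysis.Analysis"
begin

definition k_cone :: "'a::euclidean_space set \<Rightarrow> nat \<Rightarrow> bool" where
  "k_cone C k \<longleftrightarrow> closed C \<and> (\<forall>v\<in>C. \<forall>l::real. l *\<^sub>R v \<in> C)
     \<and> (\<exists>W. subspace W \<and> W \<subseteq> C \<and> dim W = k)
     \<and> (\<forall>W. subspace W \<and> W \<subseteq> C \<longrightarrow> dim W \<le> k)"

definition k_solid :: "'a::euclidean_space set \<Rightarrow> nat \<Rightarrow> bool" where
  "k_solid C k \<longleftrightarrow> (\<exists>W. subspace W \<and> dim W = k \<and> W - {0} \<subseteq> interior C)"

definition is_flow :: "(real \<Rightarrow> 'a::euclidean_space \<Rightarrow> 'a) \<Rightarrow> bool" where
  "is_flow \<Phi> \<longleftrightarrow> continuous_on UNIV (\<lambda>(t, x). \<Phi> t x) \<and> (\<forall>x. \<Phi> 0 x = x)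
     \<and> (\<forall>s t x. \<Phi> (s + t) x = \<Phi> s (\<Phi> t x))"

definition C1alpha_flow ::
  "(real \<Rightarrow> 'a::euclidean_space \<Rightarrow> 'a) \<Rightarrow> (real \<Rightarrow> 'a \<Rightarrow> 'a \<Rightarrow> 'a) \<Rightarrow> real \<Rightarrow> bool" where
  "C1alpha_flow \<Phi> D \<alpha> \<longleftrightarrow> is_flow \<Phi> \<and> 0 < \<alpha> \<and> \<alpha> \<le> 1
     \<and> (\<forall>t x. (\<Phi> t has_derivative D t x) (at x))
     \<and> (\<forall>t x. \<forall>e>0. \<exists>d>0. \<forall>s y. dist (s, y) (t, x) < d \<longrightarrow>
            onorm (\<lambda>v. D s y v - D t x v) < e)
     \<and> (\<forall>T::real. \<forall>S. compact S \<longrightarrow> (\<exists>L. \<forall>t. \<bar>t\<bar> \<le> T \<longrightarrow>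
            (\<forall>y\<in>S. \<forall>z\<in>S. onorm (\<lambda>v. D t y v - D t z v) \<le> L * dist y z powr \<alpha>)))"

definition strongly_monotone :: "(real \<Rightarrow> 'a::euclidean_space \<Rightarrow> 'a) \<Rightarrow> 'a set \<Rightarrow> bool" where
  "strongly_monotone \<Phi> C \<longleftrightarrow>
     (\<forall>x y t. x - y \<in> C \<and> t \<ge> 0 \<longrightarrow> \<Phi> t x - \<Phi> t y \<in> C)
   \<and> (\<forall>x y t. x \<noteq> y \<and> x - y \<in> C \<and> t > 0 \<longrightarrow> \<Phi> t x - \<Phi> t y \<in> interior C)"

definition FWW ::
  "(real \<Rightarrow> 'a::euclidean_space \<Rightarrow> 'a) \<Rightarrow> (real \<Rightarrow> 'a \<Rightarrow> 'a \<Rightarrow> 'a) \<Rightarrow> real \<Rightarrow> 'a set \<Rightarrow> nat \<Rightarrow> bool" where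
  "FWW \<Phi> D \<alpha> C k \<longleftrightarrow> C1alpha_flow \<Phi> D \<alpha> \<and> k_cone C k \<and> k_solid C k
     \<and> strongly_monotone \<Phi> C
     \<and> (\<forall>t>0. \<forall>x. \<forall>v\<in>C - {0}. D t x v \<in> interior C)"

definition subspace_gap :: "'a::euclidean_space set \<Rightarrow> 'a set \<Rightarrow> real" where
  "subspace_gap E F = max (Sup (insert 0 {infdist e F | e. e \<in> E \<and> norm e = 1}))
                          (Sup (insert 0 {infdist f E | f. f \<in> F \<and> norm f = 1}))"

definition gap_continuous_on :: "'a::euclidean_space set \<Rightarrow> ('a \<Rightarrow> 'a set) \<Rightarrow> bool" where
  "gap_continuous_on K E \<longleftrightarrow>
     (\<forall>x\<in>K. \<forall>e>0. \<exists>d>0. \<forall>y\<in>K. dist y x < d \<longrightarrow> subspace_gap (E y) (E x) < e)"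

definition invariant_set :: "(real \<Rightarrow> 'a \<Rightarrow> 'a) \<Rightarrow> 'a set \<Rightarrow> bool" where
  "invariant_set \<Phi> K \<longleftrightarrow> (\<forall>t. \<Phi> t ` K = K)"

definition exp_separation ::
  "(real \<Rightarrow> 'a::euclidean_space \<Rightarrow> 'a) \<Rightarrow> (real \<Rightarrow> 'a \<Rightarrow> 'a \<Rightarrow> 'a) \<Rightarrow> 'a set \<Rightarrow> nat
    \<Rightarrow> 'a set \<Rightarrow> ('a \<Rightarrow> 'a set) \<Rightarrow> ('a \<Rightarrow> 'a set) \<Rightarrow> bool" where
  "exp_separation \<Phi> D C k K E F \<longleftrightarrow>
     (\<forall>x\<in>K. subspace (E x) \<and> dim (E x) = k \<and> subspace (F x) \<and> dim (F x) = DIM('a) - k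
        \<and> E x \<inter> F x = {0} \<and> {u + w | u w. u \<in> E x \<and> w \<in> F x} = UNIV
        \<and> E x \<subseteq> interior C \<union> {0} \<and> F x \<inter> C = {0})
   \<and> gap_continuous_on K E \<and> gap_continuous_on K F
   \<and> (\<forall>x\<in>K. \<forall>t>0. D t x ` E x = E (\<Phi> t x) \<and> D t x ` F x \<subseteq> F (\<Phi> t x))
   \<and> (\<exists>M>0. \<exists>\<gamma>. 0 < \<gamma> \<and> \<gamma> < 1 \<and>
        (\<forall>x\<in>K. \<forall>t\<ge>0. \<forall>w\<in>F x. \<forall>v\<in>E x. norm w = 1 \<and> norm v = 1 \<longrightarrow>
            norm (D t x w) \<le> M * \<gamma> powr t * norm (D t x v)))"

definition lyap_quot :: "(real \<Rightarrow> 'a::euclidean_space \<Rightarrow> 'a \<Rightarrow> 'a) \<Rightarrow> ('a \<Rightarrow> 'a set) \<Rightarrow> 'a \<Rightarrow> real \<Rightarrow> real" where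
  "lyap_quot D E x t = ln (INF v\<in>{v \<in> E x. norm v = 1}. norm (D t x v)) / t"

definition k_lyapunov :: "(real \<Rightarrow> 'a::euclidean_space \<Rightarrow> 'a \<Rightarrow> 'a) \<Rightarrow> ('a \<Rightarrow> 'a set) \<Rightarrow> 'a \<Rightarrow> ereal" where
  "k_lyapunov D E x = Limsup at_top (\<lambda>t. ereal (lyap_quot D E x t))"

definition lyap_regular :: "(real \<Rightarrow> 'a::euclidean_space \<Rightarrow> 'a \<Rightarrow> 'a) \<Rightarrow> ('a \<Rightarrow> 'a set) \<Rightarrow> 'a \<Rightarrow> bool" where
  "lyap_regular D E x \<longleftrightarrow> (\<exists>L. ((\<lambda>t. ereal (lyap_quot D E x t)) \<longlongrightarrow> L) at_top)"

end

theory Submission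
  imports Defs
begin


locale setting =
  fixes \<Phi> :: "real \<Rightarrow> 'a::euclidean_space \<Rightarrow> 'a"
    and D :: "real \<Rightarrow> 'a \<Rightarrow> 'a \<Rightarrow> 'a"
    and \<alpha> :: real and C K :: "'a set" and E F :: "'a \<Rightarrow> 'a set" and k :: nat and x :: 'a
  assumes fww: "FWW \<Phi> D \<alpha> C k"
    and k1: "k \<ge> 1"
    and cK: "compact K" and invK: "invariant_set \<Phi> K"
    and sep: "exp_separation \<Phi> D C k K E F"
    and xK: "x \<in> K" and reg: "lyap_regular D E x" and lyap: "k_lyapunov D E x \<le> 0"
begin

lemma flow0: "\<Phi> 0 z = z" using fww unfolding FWW_def C1alpha_flow_def is_flow_def by auto
lemma flow_add: "\<Phi> (s + t) z = \<Phi> s (\<Phi> t z)" using fww unfolding FWW_def C1alpha_flow_def is_flow_def by auto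
lemma flow_cont: "continuous_on UNIV (\<lambda>(t, x). \<Phi> t x)" using fww unfolding FWW_def C1alpha_flow_def is_flow_def by auto
lemma deriv: "(\<Phi> t has_derivative D t z) (at z)" using fww unfolding FWW_def C1alpha_flow_def by auto
lemma bl: "bounded_linear (D t z)" using deriv by (rule has_derivative_bounded_linear)
lemma lin: "linear (D t z)" using bl bounded_linear.linear by blast
lemma alpha: "0 < \<alpha>" "\<alpha> \<le> 1" using fww unfolding FWW_def C1alpha_flow_def by auto
lemma c1: "C1alpha_flow \<Phi> D \<alpha>" using fww unfolding FWW_def by simp
lemma hoelderA: "\<forall>T::real. \<forall>S. compact S \<longrightarrow> (\<exists>L. \<forall>t. \<bar>t\<bar> \<le> T \<longrightarrow>
            (\<forall>y\<in>S. \<forall>z\<in>S. onorm (\<lambda>v. D t y v - D t z v) \<le> L * dist y z powr \<alpha>))"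
  using c1 unfolding C1alpha_flow_def by (elim conjE) assumption
lemmas hoelder = hoelderA[rule_format]

lemma chain: "D (s + t) z v = D s (\<Phi> t z) (D t z v)"
proof -
  have e: "\<Phi> (s + t) = \<Phi> s \<circ> \<Phi> t" using flow_add by (auto simp: fun_eq_iff)
  have "(\<Phi> s \<circ> \<Phi> t has_derivative D s (\<Phi> t z) \<circ> D t z) (at z)"
    by (rule diff_chain_at[OF deriv deriv])
  then have "D (s + t) z = D s (\<Phi> t z) \<circ> D t z"
    using deriv[of "s+t" z] unfolding e by (metis has_derivative_unique)
  then show ?thesis by simp
qed

lemma D0: "D 0 z v = v"
proof -
  have e: "\<Phi> 0 = (\<lambda>x. x)" using flow0 by auto
  have "D 0 z = (\<lambda>x. x)" using deriv[of 0 z] has_derivative_ident[of "at z"] unfolding e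
    by (metis has_derivative_unique)
  then show ?thesis by simp
qed

lemma Dinv: "D (-t) (\<Phi> t z) (D t z v) = v"
  using chain[of "-t" t z v] D0 by simp

lemma C_closed: "closed C" and C_smul: "v \<in> C \<Longrightarrow> l *\<^sub>R v \<in> C"
  using fww unfolding FWW_def k_cone_def by auto
lemma C0: "0 \<in> C"
proof -
  obtain W where "subspace W" "W \<subseteq> C" using fww unfolding FWW_def k_cone_def by auto
  then show ?thesis using subspace_0 by blast
qed
lemma C_neg: "v \<in> C \<Longrightarrow> -v \<in> C" using C_smul[of v "-1"] by simp
lemma sm: "strongly_monotone \<Phi> C" using fww unfolding FWW_def by simp
lemma mono1: "a - b \<in> C \<Longrightarrow> t \<ge> 0 \<Longrightarrow> \<Phi> t a - \<Phi> t b \<in> C"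
  using sm unfolding strongly_monotone_def by simp
lemma mono2: "a \<noteq> b \<Longrightarrow> a - b \<in> C \<Longrightarrow> t > 0 \<Longrightarrow> \<Phi> t a - \<Phi> t b \<in> interior C"
  using sm unfolding strongly_monotone_def by simp

lemma inK: "z \<in> K \<Longrightarrow> \<Phi> t z \<in> K" using invK unfolding invariant_set_def by blast

lemma sepEA: "\<forall>z\<in>K. subspace (E z) \<and> dim (E z) = k \<and> subspace (F z) \<and> dim (F z) = DIM('a) - k
        \<and> E z \<inter> F z = {0} \<and> {u + w | u w. u \<in> E z \<and> w \<in> F z} = UNIV
        \<and> E z \<subseteq> interior C \<union> {0} \<and> F z \<inter> C = {0}"
  using sep unfolding exp_separation_def by (elim conjE) assumption
lemmas sepE = sepEA[rule_format]
lemma gapE: "gap_continuous_on K E" 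
  using sep unfolding exp_separation_def by (elim conjE) assumption
lemma gapF: "gap_continuous_on K F"
  using sep unfolding exp_separation_def by (elim conjE) assumption

lemma sepI: "\<forall>x\<in>K. \<forall>t>0. D t x ` E x = E (\<Phi> t x) \<and> D t x ` F x \<subseteq> F (\<Phi> t x)"
  using sep unfolding exp_separation_def by (elim conjE) assumption

lemma invE: assumes "z \<in> K" "t \<ge> 0" "v \<in> E z" shows "D t z v \<in> E (\<Phi> t z)"
proof (cases "t = 0")
  case True thus ?thesis using assms by (simp add: D0 flow0)
next
  case False
  then have t: "t > 0" using assms by simp
  have "D t z ` E z = E (\<Phi> t z)" using sepI assms t by blast
  then show ?thesis using assms by blast
qed
lemma invF: assumes "z \<in> K" "t \<ge> 0" "v \<in> F z" shows "D t z v \<in> F (\<Phi> t z)"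
proof (cases "t = 0")
  case True thus ?thesis using assms by (simp add: D0 flow0)
next
  case False
  then have t: "t > 0" using assms by simp
  have "D t z ` F z \<subseteq> F (\<Phi> t z)" using sepI assms t by blast
  then show ?thesis using assms by blast
qed

lemma sepM: "\<exists>M>0. \<exists>\<gamma>. 0 < \<gamma> \<and> \<gamma> < 1 \<and>
        (\<forall>x\<in>K. \<forall>t\<ge>0. \<forall>w\<in>F x. \<forall>v\<in>E x. norm w = 1 \<and> norm v = 1 \<longrightarrow>
            norm (D t x w) \<le> M * \<gamma> powr t * norm (D t x v))"
  using sep unfolding exp_separation_def by blast

end


lemma gap_infdist:
  fixes G H :: "'a::euclidean_space set"
  assumes "subspace H" "g \<in> G" "norm g = 1"
  shows "infdist g H \<le> subspace_gap G H"
proof -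
  let ?S = "insert 0 {infdist e H | e. e \<in> G \<and> norm e = 1}"
  have "0 \<in> H" using assms(1) subspace_0 by blast
  have "bdd_above ?S"
  proof (rule bdd_aboveI[of _ 1])
    fix y assume "y \<in> ?S"
    then show "y \<le> 1"
    proof
      assume "y = 0" then show ?thesis by simp
    next
      assume "y \<in> {infdist e H | e. e \<in> G \<and> norm e = 1}"
      then obtain e where "y = infdist e H" "norm e = 1" by blast
      moreover have "infdist e H \<le> dist e 0" using \<open>0 \<in> H\<close> by (rule infdist_le)
      ultimately show ?thesis by simp
    qed
  qed
  then have "infdist g H \<le> Sup ?S" by (rule cSup_upper[rotated]) (use assms in blast)
  then show ?thesis unfolding subspace_gap_def by linarith
qed

lemma unif_sep:
  fixes G :: "'a::euclidean_space \<Rightarrow> 'a set"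
  assumes K: "compact K" and gc: "gap_continuous_on K G" and sub: "\<forall>z\<in>K. subspace (G z)"
    and A: "closed A" and nA: "\<forall>z\<in>K. \<forall>g\<in>G z. norm g = 1 \<longrightarrow> g \<notin> A"
  shows "\<exists>\<delta>>0. \<forall>z\<in>K. \<forall>g\<in>G z. norm g = 1 \<longrightarrow> (\<forall>a\<in>A. \<delta> \<le> dist g a)"
proof (rule ccontr)
  assume "\<not> ?thesis"
  then have "\<forall>n::nat. \<exists>z g a. z \<in> K \<and> g \<in> G z \<and> norm g = 1 \<and> a \<in> A \<and> dist g a < 1 / Suc n"
    by (metis not_le of_nat_0_less_iff zero_less_Suc zero_less_divide_1_iff)
  then obtain z g a where zga: "\<And>n. z n \<in> K \<and> g n \<in> G (z n) \<and> norm (g n) = 1 \<and> a n \<in> A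
      \<and> dist (g n) (a n) < 1 / Suc n"
    by metis
  have cpt: "compact (K \<times> sphere (0::'a) 1)" using K by (simp add: compact_Times)
  have "\<forall>n. (z n, g n) \<in> K \<times> sphere 0 1" using zga by (simp add: dist_norm)
  then obtain l r where l: "l \<in> K \<times> sphere 0 1" and r: "strict_mono r"
      and lim: "((\<lambda>n. (z n, g n)) \<circ> r) \<longlonglongrightarrow> l"
    by (rule seq_compactE[OF compact_imp_seq_compact[OF cpt]])
  obtain z0 g0 where l': "l = (z0, g0)" by fastforce
  have z0: "z0 \<in> K" and g0: "norm g0 = 1" using l l' by auto
  have limz: "(\<lambda>n. z (r n)) \<longlonglongrightarrow> z0" using tendsto_fst[OF lim] l' by (simp add: o_def)
  have limg: "(\<lambda>n. g (r n)) \<longlonglongrightarrow> g0" using tendsto_snd[OF lim] l' by (simp add: o_def)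
  have lim0: "(\<lambda>n. 1 / real (Suc (r n))) \<longlonglongrightarrow> 0"
  proof -
    have "(\<lambda>n. 1 / real (Suc n)) \<longlonglongrightarrow> 0" by (rule LIMSEQ_Suc[OF lim_inverse_n']) 
    from LIMSEQ_subseq_LIMSEQ[OF this r] show ?thesis by (simp only: o_def)
  qed
  have lima: "(\<lambda>n. a (r n)) \<longlonglongrightarrow> g0"
  proof -
    have e1: "eventually (\<lambda>n. 0 \<le> dist (a (r n)) (g (r n))) sequentially"
      by (rule always_eventually) simp
    have e2: "eventually (\<lambda>n. dist (a (r n)) (g (r n)) \<le> 1 / real (Suc (r n))) sequentially"
    proof (rule always_eventually, rule allI)
      fix n show "dist (a (r n)) (g (r n)) \<le> 1 / real (Suc (r n))"
        using zga[of "r n"] by (simp add: dist_commute)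
    qed
    have d: "(\<lambda>n. dist (a (r n)) (g (r n))) \<longlonglongrightarrow> 0"
      by (rule tendsto_sandwich[OF e1 e2 tendsto_const lim0])
    have "(\<lambda>n. a (r n) - g (r n)) \<longlonglongrightarrow> 0" using d
      by (simp only: dist_norm tendsto_norm_zero_iff)
    then have "(\<lambda>n. (a (r n) - g (r n)) + g (r n)) \<longlonglongrightarrow> 0 + g0" using limg by (rule tendsto_add)
    then show ?thesis by simp
  qed
  have g0A: "g0 \<in> A" by (rule closed_sequentially[OF A _ lima]) (use zga in blast)
  have "infdist g0 (G z0) \<le> e" if e: "e > 0" for e
  proof -
    obtain d where d: "d > 0" "\<forall>y\<in>K. dist y z0 < d \<longrightarrow> subspace_gap (G y) (G z0) < e / 2"
      using gc z0 e unfolding gap_continuous_on_def by (meson half_gt_zero)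
    have "eventually (\<lambda>n. dist (z (r n)) z0 < d) sequentially" using limz d(1) tendstoD by blast
    moreover have "eventually (\<lambda>n. dist (g (r n)) g0 < e / 2) sequentially" using limg e tendstoD
      by (metis half_gt_zero)
    ultimately obtain n where n: "dist (z (r n)) z0 < d" "dist (g (r n)) g0 < e / 2"
      by (metis (mono_tags, lifting) eventually_conj_iff eventually_sequentially order.refl)
    have "infdist (g (r n)) (G z0) \<le> subspace_gap (G (z (r n))) (G z0)"
      using gap_infdist[of "G z0" "g (r n)" "G (z (r n))"] sub z0 zga by blast
    also have "\<dots> < e / 2" using d(2) n zga by blast
    finally have "infdist (g (r n)) (G z0) < e / 2" .
    moreover have "infdist g0 (G z0) \<le> infdist (g (r n)) (G z0) + dist g0 (g (r n))"
      by (rule infdist_triangle)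
    ultimately show ?thesis using n(2) by (simp add: dist_commute)
  qed
  then have "infdist g0 (G z0) \<le> 0" by (meson dense not_le)
  then have "infdist g0 (G z0) = 0" using infdist_nonneg by (metis antisym)
  moreover have "closed (G z0)" using sub z0 closed_subspace by blast
  moreover have "G z0 \<noteq> {}" using sub z0 subspace_0 by blast
  ultimately have "g0 \<in> G z0" using in_closed_iff_infdist_zero by blast
  then show False using nA z0 g0 g0A by blast
qed


context setting begin

lemma E_int: "z \<in> K \<Longrightarrow> E z \<subseteq> interior C \<union> {0}" using sepE by blast
lemma F_C: "z \<in> K \<Longrightarrow> F z \<inter> C = {0}" using sepE by blast
lemma E_sub: "z \<in> K \<Longrightarrow> subspace (E z)" using sepE by blast
lemma F_sub: "z \<in> K \<Longrightarrow> subspace (F z)" using sepE by blast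

lemma E_sub_C: "z \<in> K \<Longrightarrow> v \<in> E z \<Longrightarrow> v \<in> C"
  using sepE[of z] C0 interior_subset by blast

lemma deltaF: "\<exists>\<delta>>0. \<forall>z\<in>K. \<forall>f\<in>F z. \<forall>c\<in>C. \<delta> * norm f \<le> norm (f - c)"
proof -
  have nA: "\<forall>z\<in>K. \<forall>g\<in>F z. norm g = 1 \<longrightarrow> g \<notin> C"
  proof (intro ballI impI)
    fix z g assume "z \<in> K" "g \<in> F z" "norm g = 1"
    then have "g \<noteq> 0" by auto
    then show "g \<notin> C" using F_C[OF \<open>z \<in> K\<close>] \<open>g \<in> F z\<close> by blast
  qed
  have subF: "\<forall>z\<in>K. subspace (F z)" using F_sub by blast
  obtain \<delta> where d: "\<delta> > 0" "\<forall>z\<in>K. \<forall>g\<in>F z. norm g = 1 \<longrightarrow> (\<forall>a\<in>C. \<delta> \<le> dist g a)"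
    using unif_sep[OF cK gapF subF C_closed nA] by blast
  have "\<delta> * norm f \<le> norm (f - c)" if z: "z \<in> K" and f: "f \<in> F z" and c: "c \<in> C" for z f c
  proof (cases "f = 0")
    case True then show ?thesis by simp
  next
    case False
    let ?n = "norm f"
    have n: "?n > 0" using False by simp
    have g: "(1 / ?n) *\<^sub>R f \<in> F z" using F_sub[OF z] f subspace_scale by blast
    have g1: "norm ((1 / ?n) *\<^sub>R f) = 1" using n by simp
    have a: "(1 / ?n) *\<^sub>R c \<in> C" using C_smul c by blast
    have "\<delta> \<le> dist ((1 / ?n) *\<^sub>R f) ((1 / ?n) *\<^sub>R c)" using d(2) z g g1 a by blast
    also have "\<dots> = norm (f - c) / ?n"
      by (simp add: dist_norm scaleR_diff_right[symmetric] n)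
    finally show ?thesis using n by (simp add: field_simps)
  qed
  then show ?thesis using d(1) by blast
qed

lemma deltaE: "\<exists>\<delta>>0. \<forall>z\<in>K. \<forall>e\<in>E z. \<forall>u. norm u < \<delta> * norm e \<longrightarrow> e + u \<in> C"
proof -
  let ?A = "closure (- C)"
  have nA: "\<forall>z\<in>K. \<forall>g\<in>E z. norm g = 1 \<longrightarrow> g \<notin> ?A"
  proof (intro ballI impI)
    fix z g assume "z \<in> K" "g \<in> E z" "norm g = 1"
    then have "g \<in> interior C \<union> {0}" "g \<noteq> 0" using E_int[OF \<open>z \<in> K\<close>] \<open>g \<in> E z\<close> by auto
    then have "g \<in> interior C" by blast
    then show "g \<notin> ?A" unfolding closure_complement by blast
  qed
  have subE: "\<forall>z\<in>K. subspace (E z)" using E_sub by blast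
  obtain \<delta> where d: "\<delta> > 0" "\<forall>z\<in>K. \<forall>g\<in>E z. norm g = 1 \<longrightarrow> (\<forall>a\<in>?A. \<delta> \<le> dist g a)"
    using unif_sep[OF cK gapE subE closed_closure nA] by blast
  have "e + u \<in> C" if z: "z \<in> K" and e: "e \<in> E z" and u: "norm u < \<delta> * norm e" for z e u
  proof (rule ccontr)
    assume nC: "e + u \<notin> C"
    let ?n = "norm e"
    have "\<delta> * ?n > 0" using u norm_ge_zero[of u] by linarith
    then have n: "?n > 0" using d(1) by (simp add: zero_less_mult_iff)
    have g: "(1 / ?n) *\<^sub>R e \<in> E z" using E_sub[OF z] e subspace_scale by blast
    have g1: "norm ((1 / ?n) *\<^sub>R e) = 1" using n by simp
    have "(1 / ?n) *\<^sub>R (e + u) \<notin> C"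
    proof
      assume "(1 / ?n) *\<^sub>R (e + u) \<in> C"
      then have "?n *\<^sub>R ((1 / ?n) *\<^sub>R (e + u)) \<in> C" by (rule C_smul)
      then show False using nC n by simp
    qed
    then have a: "(1 / ?n) *\<^sub>R (e + u) \<in> ?A" using closure_subset by blast
    have "\<delta> \<le> dist ((1 / ?n) *\<^sub>R e) ((1 / ?n) *\<^sub>R (e + u))" using d(2) z g g1 a by blast
    also have "\<dots> = norm u / ?n"
      using n by (simp add: dist_norm scaleR_diff_right[symmetric])
    finally show False using n u by (simp add: field_simps)
  qed
  then show ?thesis using d(1) by blast
qed

lemma decomp: "z \<in> K \<Longrightarrow> \<exists>e f. e \<in> E z \<and> f \<in> F z \<and> u = e + f"
proof -
  assume z: "z \<in> K"
  have "u \<in> {u + w | u w. u \<in> E z \<and> w \<in> F z}" using sepE[OF z] by simp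
  then show ?thesis by blast
qed

lemma decomp_unique:
  assumes z: "z \<in> K" and "e1 \<in> E z" "e2 \<in> E z" "f1 \<in> F z" "f2 \<in> F z" and eq: "e1 + f1 = e2 + f2"
  shows "e1 = e2 \<and> f1 = f2"
proof -
  have "e1 - e2 \<in> E z" using E_sub[OF z] F_sub[OF z] assms subspace_diff by blast
  moreover have "f2 - f1 \<in> F z" using E_sub[OF z] F_sub[OF z] assms subspace_diff by blast
  moreover have "e1 - e2 = f2 - f1" using eq by (simp add: algebra_simps)
  ultimately have "e1 - e2 \<in> E z \<inter> F z" by simp
  then have "e1 - e2 = 0" using sepE[OF z] by blast
  then show ?thesis using eq by simp
qed

end


context setting begin

lemma remainder: "\<exists>H\<ge>0. \<forall>z\<in>K. \<forall>u. norm u \<le> 1 \<longrightarrow>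
   norm (\<Phi> 1 (z + u) - \<Phi> 1 z - D 1 z u) \<le> H * norm u * norm u powr \<alpha>"
proof -
  define S where "S = {a + b | a b. a \<in> K \<and> b \<in> cball (0::'a) 1}"
  have cS: "compact S" unfolding S_def by (rule compact_sums[OF cK compact_cball])
  obtain L where L: "\<forall>t. \<bar>t\<bar> \<le> 1 \<longrightarrow> (\<forall>y\<in>S. \<forall>z\<in>S. onorm (\<lambda>v. D t y v - D t z v) \<le> L * dist y z powr \<alpha>)"
    using hoelder[OF cS] by blast
  have L1: "\<forall>y\<in>S. \<forall>z\<in>S. onorm (\<lambda>v. D 1 y v - D 1 z v) \<le> L * dist y z powr \<alpha>" using L by simp
  have main: "norm (\<Phi> 1 (z + u) - \<Phi> 1 z - D 1 z u) \<le> \<bar>L\<bar> * norm u * norm u powr \<alpha>"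
    if z: "z \<in> K" and u: "norm u \<le> 1" for z u
  proof -
    let ?r = "norm u"
    let ?B = "\<bar>L\<bar> * ?r powr \<alpha>"
    have sub: "cball z ?r \<subseteq> S"
    proof
      fix v assume "v \<in> cball z ?r"
      then have "norm (v - z) \<le> 1" using u by (simp add: dist_norm norm_minus_commute)
      then have "v - z \<in> cball 0 1" by (simp add: dist_norm norm_minus_commute)
      moreover have "v = z + (v - z)" by simp
      ultimately show "v \<in> S" unfolding S_def using z by blast
    qed
    have der: "((\<lambda>v. \<Phi> 1 v - D 1 z v) has_derivative (\<lambda>w. D 1 v w - D 1 z w)) (at v within cball z ?r)" for v
      by (rule has_derivative_at_withinI, rule has_derivative_diff[OF deriv bounded_linear_imp_has_derivative[OF bl]])
    have bnd: "onorm (\<lambda>w. D 1 v w - D 1 z w) \<le> ?B" if v: "v \<in> cball z ?r" for v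
    proof -
      have "onorm (\<lambda>w. D 1 v w - D 1 z w) \<le> L * dist v z powr \<alpha>" using L1 sub v z by (meson centre_in_cball norm_ge_zero subsetD)
      also have "\<dots> \<le> \<bar>L\<bar> * dist v z powr \<alpha>" by (simp add: mult_right_mono)
      also have "\<dots> \<le> \<bar>L\<bar> * ?r powr \<alpha>"
        apply (rule mult_left_mono[OF powr_mono2])
        using alpha v by (auto simp: dist_commute)
      finally show ?thesis .
    qed
    have "norm ((\<Phi> 1 (z + u) - D 1 z (z + u)) - (\<Phi> 1 z - D 1 z z)) \<le> ?B * norm ((z + u) - z)"
      by (rule differentiable_bound[OF convex_cball der bnd]) (auto simp: dist_norm)
    moreover have "D 1 z (z + u) = D 1 z z + D 1 z u" using lin linear_add by blast
    ultimately show ?thesis by (simp add: algebra_simps)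
  qed
  show ?thesis by (rule exI[of _ "\<bar>L\<bar>"]) (use main in auto)
qed

lemma Dback_bound: "\<exists>B\<ge>1. \<forall>z\<in>K. onorm (D (-1) z) \<le> B"
proof -
  obtain L where L: "\<forall>t. \<bar>t\<bar> \<le> 1 \<longrightarrow> (\<forall>y\<in>K. \<forall>z\<in>K. onorm (\<lambda>v. D t y v - D t z v) \<le> L * dist y z powr \<alpha>)"
    using hoelder[OF cK] by blast
  have L1: "\<forall>y\<in>K. \<forall>z\<in>K. onorm (\<lambda>v. D (-1) y v - D (-1) z v) \<le> L * dist y z powr \<alpha>" using L by simp
  obtain R where R: "\<forall>z\<in>K. norm z \<le> R" using compact_imp_bounded[OF cK] bounded_iff by blast
  have "onorm (D (-1) z) \<le> \<bar>L\<bar> * (2 * R) powr \<alpha> + onorm (D (-1) x)" if z: "z \<in> K" for z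
  proof -
    have "D (-1) z = (\<lambda>v. (D (-1) z v - D (-1) x v) + D (-1) x v)" by simp
    then have "onorm (D (-1) z) \<le> onorm (\<lambda>v. D (-1) z v - D (-1) x v) + onorm (D (-1) x)"
      using onorm_triangle[OF bounded_linear_sub[OF bl[of "-1" z] bl[of "-1" x]] bl[of "-1" x]] by simp
    also have "onorm (\<lambda>v. D (-1) z v - D (-1) x v) \<le> L * dist z x powr \<alpha>" using L1 z xK by blast
    also have "\<dots> \<le> \<bar>L\<bar> * dist z x powr \<alpha>" by (simp add: mult_right_mono)
    also have "\<dots> \<le> \<bar>L\<bar> * (2 * R) powr \<alpha>"
    proof (rule mult_left_mono[OF powr_mono2])
      have "dist z x \<le> norm z + norm x" by (simp add: dist_norm norm_triangle_ineq4)
      moreover have "norm z \<le> R" "norm x \<le> R" using R z xK by auto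
      ultimately show "dist z x \<le> 2 * R" by linarith
    qed (use alpha in auto)
    finally show ?thesis by simp
  qed
  then show ?thesis
    by (intro exI[of _ "max 1 (\<bar>L\<bar> * (2 * R) powr \<alpha> + onorm (D (-1) x))"]) force
qed

lemma unif_cont: "e > 0 \<Longrightarrow> \<exists>d>0. \<forall>s\<in>{0..1}. \<forall>z\<in>K. \<forall>u. norm u < d \<longrightarrow> norm (\<Phi> s (z + u) - \<Phi> s z) < e"
proof -
  assume e: "e > 0"
  define S where "S = {a + b | a b. a \<in> K \<and> b \<in> cball (0::'a) 1}"
  have cS: "compact S" unfolding S_def by (rule compact_sums[OF cK compact_cball])
  have cP: "compact ({0..1::real} \<times> S)" using cS by (simp add: compact_Times)
  have "continuous_on ({0..1::real} \<times> S) (\<lambda>(t, x). \<Phi> t x)"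
    using flow_cont continuous_on_subset by blast
  then have uc: "uniformly_continuous_on ({0..1::real} \<times> S) (\<lambda>(t, x). \<Phi> t x)"
    using compact_uniformly_continuous cP by blast
  obtain d where d: "d > 0" "\<forall>p\<in>{0..1::real} \<times> S. \<forall>q\<in>{0..1::real} \<times> S. dist q p < d \<longrightarrow>
       dist ((\<lambda>(t, x). \<Phi> t x) q) ((\<lambda>(t, x). \<Phi> t x) p) < e"
    using uc e unfolding uniformly_continuous_on_def by blast
  have "norm (\<Phi> s (z + u) - \<Phi> s z) < e"
    if s: "s \<in> {0..1}" and z: "z \<in> K" and u: "norm u < min d 1" for s z u
  proof -
    have zS: "z \<in> S" unfolding S_def using z by force
    have zuS: "z + u \<in> S" unfolding S_def using z u by force
    have "dist (s, z + u) (s, z) = norm u" by (simp add: dist_Pair_Pair dist_norm)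
    then have "dist (s, z + u) (s, z) < d" using u by simp
    then show ?thesis using d(2) s zS zuS by (force simp: dist_norm)
  qed
  then show ?thesis using d(1) by (intro exI[of _ "min d 1"]) auto
qed

end


context setting begin

definition xs :: "nat \<Rightarrow> 'a" where "xs n = \<Phi> (real n) x"
definition U :: "'a set" where "U = {v \<in> E x. norm v = 1}"
definition mm :: "nat \<Rightarrow> real" where "mm n = (INF v\<in>U. norm (D (real n) x v))"

lemma xsK: "xs n \<in> K" unfolding xs_def using inK xK by blast

lemma xs_add: "xs (j + m) = \<Phi> (real m) (xs j)"
  unfolding xs_def by (simp add: flow_add[symmetric] add.commute)

lemma D_add: "D (real (j + m)) x v = D (real m) (xs j) (D (real j) x v)"
  unfolding xs_def using chain[of "real m" "real j" x v] by (simp add: add.commute)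

lemma D_1step: "D (real (Suc n)) z v = D 1 (\<Phi> (real n) z) (D (real n) z v)"
proof -
  have "real (Suc n) = 1 + real n" by simp
  then show ?thesis using chain[of 1 "real n" z v] by simp
qed

lemma U_ne: "U \<noteq> {}"
proof -
  have "dim (E x) = k" using sepE[OF xK] by blast
  then have "dim (E x) \<noteq> 0" using k1 by linarith
  then have "\<not> E x \<subseteq> {0}" using dim_eq_0[of "E x"] by simp
  then obtain v where v: "v \<in> E x" "v \<noteq> 0" by blast
  then have "(1 / norm v) *\<^sub>R v \<in> E x" using E_sub[OF xK] subspace_scale by blast
  moreover have "norm ((1 / norm v) *\<^sub>R v) = 1" using v by simp
  ultimately show ?thesis unfolding U_def by blast
qed

lemma D_lower: assumes "z \<in> K" and B: "\<forall>z\<in>K. onorm (D (-1) z) \<le> B" "B \<ge> 1"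
  shows "norm v \<le> B ^ n * norm (D (real n) z v)"
proof (induction n arbitrary: v)
  case 0 then show ?case by (simp add: D0)
next
  case (Suc n)
  let ?y = "\<Phi> (real n) z"
  let ?w = "D (real n) z v"
  have yK: "?y \<in> K" using inK assms by blast
  have "norm ?w = norm (D (-1) (\<Phi> 1 ?y) (D 1 ?y ?w))" using Dinv by simp
  also have "\<dots> \<le> onorm (D (-1) (\<Phi> 1 ?y)) * norm (D 1 ?y ?w)" by (rule onorm[OF bl])
  also have "\<dots> \<le> B * norm (D 1 ?y ?w)"
    by (rule mult_right_mono) (use B inK[OF yK] in auto)
  finally have 1: "norm ?w \<le> B * norm (D 1 ?y ?w)" .
  have "norm v \<le> B ^ n * norm ?w" by (rule Suc.IH)
  also have "\<dots> \<le> B ^ n * (B * norm (D 1 ?y ?w))"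
    by (rule mult_left_mono[OF 1]) (use B in simp)
  also have "\<dots> = B ^ Suc n * norm (D (real (Suc n)) z v)" using D_1step[of n z v] by simp
  finally show ?case .
qed

lemma bdd_U: "bdd_below ((\<lambda>v. norm (D t x v)) ` U)"
  by (rule bdd_belowI[of _ 0]) auto

lemma mm_le: "v \<in> U \<Longrightarrow> mm n \<le> norm (D (real n) x v)"
  unfolding mm_def by (rule cINF_lower[OF bdd_U])

lemma mm_lower: "\<exists>B\<ge>1. \<forall>n. 1 / B ^ n \<le> mm n"
proof -
  obtain B where B: "B \<ge> 1" "\<forall>z\<in>K. onorm (D (-1) z) \<le> B" using Dback_bound by blast
  have "1 / B ^ n \<le> mm n" for n
    unfolding mm_def
  proof (rule cINF_greatest[OF U_ne])
    fix v assume "v \<in> U"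
    then have "norm v = 1" unfolding U_def by simp
    moreover have "norm v \<le> B ^ n * norm (D (real n) x v)" by (rule D_lower[OF xK B(2) B(1)])
    moreover have "B ^ n > 0" using B by simp
    ultimately show "1 / B ^ n \<le> norm (D (real n) x v)" by (simp add: field_simps)
  qed
  then show ?thesis using B by blast
qed

lemma mm_pos: "mm n > 0"
proof -
  obtain B where "B \<ge> 1" "\<forall>n. 1 / B ^ n \<le> mm n" using mm_lower by blast
  moreover have "1 / B ^ n > 0" using \<open>B \<ge> 1\<close> by simp
  ultimately show ?thesis by (meson less_le_trans)
qed

lemma quot_eq: "lyap_quot D E x (real n) = ln (mm n) / real n"
  unfolding lyap_quot_def mm_def U_def by simp

lemma lyap_limit: "\<exists>l\<le>0. (\<lambda>n. ln (mm n) / real n) \<longlonglongrightarrow> l"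
proof -
  obtain L where L: "((\<lambda>t. ereal (lyap_quot D E x t)) \<longlongrightarrow> L) at_top"
    using reg unfolding lyap_regular_def by blast
  have "k_lyapunov D E x = L" unfolding k_lyapunov_def by (rule lim_imp_Limsup[OF _ L]) simp
  then have L0: "L \<le> 0" using lyap by simp
  have Ls: "(\<lambda>n. ereal (ln (mm n) / real n)) \<longlonglongrightarrow> L"
    using filterlim_compose[OF L filterlim_real_sequentially] by (simp add: quot_eq)
  obtain B where B: "B \<ge> 1" "\<forall>n. 1 / B ^ n \<le> mm n" using mm_lower by blast
  have lb: "- ln B \<le> ln (mm n) / real n" if n: "n \<ge> 1" for n
  proof -
    have "ln (1 / B ^ n) \<le> ln (mm n)" using B mm_pos by (simp del: divide_const_simps)
    then have "- (real n * ln B) \<le> ln (mm n)" using B by (simp add: ln_div ln_realpow)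
    then show ?thesis using n by (simp add: field_simps)
  qed
  have "ereal (- ln B) \<le> L"
  proof (rule tendsto_le[OF _ Ls tendsto_const])
    show "eventually (\<lambda>n. ereal (- ln B) \<le> ereal (ln (mm n) / real n)) sequentially"
      using lb by (auto simp: eventually_sequentially)
  qed simp
  then obtain l where l: "L = ereal l" using L0 by (cases L) auto
  then show ?thesis using Ls L0 by auto
qed

end


context setting begin

lemma tempered:
  assumes e: "\<epsilon> > 0" and lim: "(\<lambda>n. ln (mm n) / real n) \<longlonglongrightarrow> l"
  shows "\<exists>A\<ge>0. \<forall>n. \<bar>ln (mm n) - l * real n\<bar> \<le> \<epsilon> * real n + A"
proof -
  obtain N where N: "\<forall>n\<ge>N. dist (ln (mm n) / real n) l < \<epsilon>"
    using lim e unfolding LIMSEQ_def by blast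
  define N' where "N' = max N 1"
  define A where "A = (\<Sum>i<N'. \<bar>ln (mm i) - l * real i\<bar>)"
  have A0: "A \<ge> 0" unfolding A_def by (rule sum_nonneg) simp
  have "\<bar>ln (mm n) - l * real n\<bar> \<le> \<epsilon> * real n + A" for n
  proof (cases "n < N'")
    case True
    then have "\<bar>ln (mm n) - l * real n\<bar> \<le> A" unfolding A_def
      by (intro member_le_sum) auto
    moreover have "\<epsilon> * real n \<ge> 0" using e by simp
    ultimately show ?thesis by linarith
  next
    case False
    then have n: "n \<ge> N" "n \<ge> 1" unfolding N'_def by auto
    then have "\<bar>ln (mm n) / real n - l\<bar> < \<epsilon>" using N by (simp add: dist_real_def)
    moreover have "ln (mm n) / real n - l = (ln (mm n) - l * real n) / real n" using n by (simp add: field_simps)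
    ultimately have "\<bar>ln (mm n) - l * real n\<bar> / real n < \<epsilon>" by simp
    then have "\<bar>ln (mm n) - l * real n\<bar> < \<epsilon> * real n" using n by (simp add: field_simps)
    then show ?thesis using A0 by linarith
  qed
  then show ?thesis using A0 by blast
qed

lemma KB: "\<exists>\<gamma>. 0 < \<gamma> \<and> \<gamma> < 1 \<and> (\<forall>\<epsilon>>0. \<exists>K0\<ge>1. \<forall>j m. \<forall>f\<in>F (xs j).
    norm (D (real m) (xs j) f) \<le> K0 * (\<gamma> * exp \<epsilon>) ^ m * exp (2 * \<epsilon> * real j) * norm f)"
proof -
  obtain M \<gamma> where M: "M > 0" "0 < \<gamma>" "\<gamma> < 1" and sepb: "\<forall>x\<in>K. \<forall>t\<ge>0. \<forall>w\<in>F x. \<forall>v\<in>E x. norm w = 1 \<and> norm v = 1 \<longrightarrow>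
            norm (D t x w) \<le> M * \<gamma> powr t * norm (D t x v)"
    using sepM by blast
  obtain l where l: "l \<le> 0" "(\<lambda>n. ln (mm n) / real n) \<longlonglongrightarrow> l" using lyap_limit by blast
  have "\<exists>K0\<ge>1. \<forall>j m. \<forall>f\<in>F (xs j).
    norm (D (real m) (xs j) f) \<le> K0 * (\<gamma> * exp \<epsilon>) ^ m * exp (2 * \<epsilon> * real j) * norm f" if e: "\<epsilon> > 0" for \<epsilon>
  proof -
    obtain A where A: "A \<ge> 0" "\<forall>n. \<bar>ln (mm n) - l * real n\<bar> \<le> \<epsilon> * real n + A"
      using tempered[OF e l(2)] by blast
    define K0 where "K0 = max 1 (M * exp (2 * A))"
    have main: "norm (D (real m) (xs j) f) \<le> K0 * (\<gamma> * exp \<epsilon>) ^ m * exp (2 * \<epsilon> * real j) * norm f"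
      if f: "f \<in> F (xs j)" for j m f
    proof (cases "f = 0")
      case True
      then show ?thesis using linear_0[OF lin] by simp
    next
      case False
      let ?Df = "norm (D (real m) (xs j) f)"
      let ?nf = "norm f"
      have nf: "?nf > 0" using False by simp
      have gm: "\<gamma> powr real m = \<gamma> ^ m" using M by (simp add: powr_realpow)
      have gpos: "\<gamma> ^ m > 0" using M by simp
      have c: "?Df * mm j / (M * \<gamma> ^ m * ?nf) \<le> mm (j + m)"
        unfolding mm_def[of "j+m"]
      proof (rule cINF_greatest[OF U_ne])
        fix v assume v: "v \<in> U"
        let ?u = "D (real j) x v"
        have vE: "v \<in> E x" using v unfolding U_def by simp
        have uE: "?u \<in> E (xs j)" unfolding xs_def by (rule invE[OF xK _ vE]) simp
        have un: "norm ?u \<ge> mm j" by (rule mm_le[OF v])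
        have upos: "norm ?u > 0" using un mm_pos[of j] by linarith
        have f1: "(1 / ?nf) *\<^sub>R f \<in> F (xs j)" using F_sub[OF xsK] f subspace_scale by blast
        have u1: "(1 / norm ?u) *\<^sub>R ?u \<in> E (xs j)" using E_sub[OF xsK] uE subspace_scale by blast
        have "norm (D (real m) (xs j) ((1 / ?nf) *\<^sub>R f)) \<le>
              M * \<gamma> powr real m * norm (D (real m) (xs j) ((1 / norm ?u) *\<^sub>R ?u))"
          using sepb xsK f1 u1 nf upos by simp
        then have "?Df / ?nf \<le> M * \<gamma> ^ m * (norm (D (real m) (xs j) ?u) / norm ?u)"
          using nf upos gm by (simp add: linear_scale[OF lin])
        moreover have "D (real m) (xs j) ?u = D (real (j + m)) x v" using D_add[of j m v] by simp
        ultimately have "?Df / ?nf \<le> M * \<gamma> ^ m * (norm (D (real (j + m)) x v) / norm ?u)" by simp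
        then have "?Df * norm ?u \<le> M * \<gamma> ^ m * ?nf * norm (D (real (j + m)) x v)"
          using nf upos by (simp add: field_simps)
        moreover have "?Df * mm j \<le> ?Df * norm ?u" by (rule mult_left_mono[OF un]) simp
        ultimately have "?Df * mm j \<le> M * \<gamma> ^ m * ?nf * norm (D (real (j + m)) x v)" by linarith
        then show "?Df * mm j / (M * \<gamma> ^ m * ?nf) \<le> norm (D (real (j + m)) x v)"
          using M gpos nf by (simp add: field_simps)
      qed
      have mjpos: "mm j > 0" by (rule mm_pos)
      have "?Df \<le> M * \<gamma> ^ m * ?nf * (mm (j + m) / mm j)"
        using c M gpos nf mjpos by (simp add: field_simps)
      also have "mm (j + m) / mm j \<le> exp (2 * A) * exp \<epsilon> ^ m * exp (2 * \<epsilon> * real j)"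
      proof -
        have r: "mm (j + m) / mm j = exp (ln (mm (j + m)) - ln (mm j))"
          using mm_pos mjpos by (simp add: exp_diff)
        have "ln (mm (j + m)) \<le> l * real (j + m) + \<epsilon> * real (j + m) + A" using A(2)[rule_format, of "j+m"] by linarith
        moreover have "ln (mm j) \<ge> l * real j - \<epsilon> * real j - A" using A(2)[rule_format, of "j"] by linarith
        moreover have "l * real m \<le> 0" using l(1) by (simp add: mult_nonpos_nonneg)
        ultimately have "ln (mm (j + m)) - ln (mm j) \<le> 2 * A + real m * \<epsilon> + 2 * \<epsilon> * real j"
          by (simp add: algebra_simps)
        then have "exp (ln (mm (j + m)) - ln (mm j)) \<le> exp (2 * A + real m * \<epsilon> + 2 * \<epsilon> * real j)" by simp
        also have "\<dots> = exp (2 * A) * exp \<epsilon> ^ m * exp (2 * \<epsilon> * real j)"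
          by (simp add: exp_add exp_of_nat_mult)
        finally show ?thesis using r by simp
      qed
      then have "M * \<gamma> ^ m * ?nf * (mm (j + m) / mm j) \<le> M * \<gamma> ^ m * ?nf * (exp (2 * A) * exp \<epsilon> ^ m * exp (2 * \<epsilon> * real j))"
        using M gpos nf by (intro mult_left_mono) auto
      also have "\<dots> = (M * exp (2 * A)) * (\<gamma> * exp \<epsilon>) ^ m * exp (2 * \<epsilon> * real j) * ?nf"
        by (simp add: power_mult_distrib)
      also have "\<dots> \<le> K0 * (\<gamma> * exp \<epsilon>) ^ m * exp (2 * \<epsilon> * real j) * ?nf"
        unfolding K0_def using M by (intro mult_right_mono) auto
      finally show ?thesis .
    qed
    show ?thesis by (rule exI[of _ K0]) (use main in \<open>auto simp: K0_def\<close>)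
  qed
  then show ?thesis using M by blast
qed

end


lemma geom_le: fixes q :: real assumes "0 \<le> q" "q < 1" shows "(\<Sum>j<N. q ^ j) \<le> 1 / (1 - q)"
proof -
  have "(\<Sum>j<N. q ^ j) = (1 - q ^ N) / (1 - q)" using assms by (simp add: sum_gp_strict)
  also have "\<dots> \<le> 1 / (1 - q)" using assms by (intro divide_right_mono) auto
  finally show ?thesis .
qed

lemma pow_powr: fixes \<rho> :: real assumes "\<rho> > 0" shows "(\<rho> ^ j) powr a = (\<rho> powr a) ^ j"
proof -
  have "(\<rho> ^ j) powr a = (\<rho> powr real j) powr a" using assms by (simp add: powr_realpow)
  also have "\<dots> = (\<rho> powr a) powr real j" by (simp add: powr_powr mult.commute)
  also have "\<dots> = (\<rho> powr a) ^ j" using assms by (simp add: powr_realpow)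
  finally show ?thesis .
qed

lemma seq_est:
  fixes \<phi> \<beta> :: "nat \<Rightarrow> real"
  assumes \<rho>: "0 < \<rho>" "\<rho> < 1" and \<tau>: "\<tau> > 0" and \<alpha>: "0 < \<alpha>"
    and q: "\<tau> * \<rho> powr \<alpha> < 1" and K0: "K0 \<ge> 1" and G: "G \<ge> 0" and c: "c > 0"
    and rec: "\<And>N. \<phi> N \<le> K0 * \<rho> ^ N * \<phi> 0 + (\<Sum>j<N. K0 * \<rho> ^ (N - Suc j) * \<tau> ^ Suc j * \<beta> j)"
    and b\<beta>: "\<And>j. c * \<phi> j \<le> 1 \<Longrightarrow> \<beta> j \<le> G * \<phi> j * (c * \<phi> j) powr \<alpha>"
    and nn: "\<And>j. 0 \<le> \<phi> j"
    and s1: "2 * c * K0 * \<phi> 0 \<le> 1"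
    and s2: "2 * K0 * G * \<tau> / (1 - \<tau> * \<rho> powr \<alpha>) * (2 * c * K0 * \<phi> 0) powr \<alpha> \<le> \<rho>"
  shows "\<phi> N \<le> 2 * K0 * \<rho> ^ N * \<phi> 0"
proof (induction N rule: less_induct)
  case (less N)
  define q where "q = \<tau> * \<rho> powr \<alpha>"
  define Z where "Z = (2 * c * K0 * \<phi> 0) powr \<alpha>"
  have q0: "0 \<le> q" "q < 1" using q \<tau> unfolding q_def by auto
  have Z0: "Z \<ge> 0" unfolding Z_def by simp
  have p0: "\<phi> 0 \<ge> 0" by (rule nn)
  have tm: "K0 * \<rho> ^ (N - Suc j) * \<tau> ^ Suc j * \<beta> j \<le> (2 * K0 * K0 * G * Z * \<tau> * \<phi> 0 * \<rho> ^ (N - 1)) * q ^ j"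
    if j: "j < N" for j
  proof -
    have IH: "\<phi> j \<le> 2 * K0 * \<rho> ^ j * \<phi> 0" using less.IH j by blast
    have rj: "\<rho> ^ j \<le> 1" using \<rho> by (simp add: power_le_one)
    have "c * \<phi> j \<le> c * (2 * K0 * \<rho> ^ j * \<phi> 0)" using IH c by simp
    also have "\<dots> = (2 * c * K0 * \<phi> 0) * \<rho> ^ j" by simp
    finally have cphi: "c * \<phi> j \<le> (2 * c * K0 * \<phi> 0) * \<rho> ^ j" .
    also have "\<dots> \<le> 2 * c * K0 * \<phi> 0" using rj c K0 p0 by (simp add: mult_left_le)
    also have "\<dots> \<le> 1" by (rule s1)
    finally have "c * \<phi> j \<le> 1" .
    then have b: "\<beta> j \<le> G * \<phi> j * (c * \<phi> j) powr \<alpha>" by (rule b\<beta>)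
    have "(c * \<phi> j) powr \<alpha> \<le> ((2 * c * K0 * \<phi> 0) * \<rho> ^ j) powr \<alpha>"
      by (rule powr_mono2) (use \<alpha> c nn cphi in auto)
    also have "\<dots> = Z * (\<rho> powr \<alpha>) ^ j" unfolding Z_def using \<rho> c K0 p0
      by (simp add: powr_mult pow_powr)
    finally have cz: "(c * \<phi> j) powr \<alpha> \<le> Z * (\<rho> powr \<alpha>) ^ j" .
    have "\<beta> j \<le> G * (2 * K0 * \<rho> ^ j * \<phi> 0) * (Z * (\<rho> powr \<alpha>) ^ j)"
    proof -
      have "G * \<phi> j \<le> G * (2 * K0 * \<rho> ^ j * \<phi> 0)" using IH G by (rule mult_left_mono)
      moreover have "0 \<le> G * \<phi> j" using G nn by simp
      ultimately have "G * \<phi> j * (c * \<phi> j) powr \<alpha> \<le> G * (2 * K0 * \<rho> ^ j * \<phi> 0) * (Z * (\<rho> powr \<alpha>) ^ j)"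
        using cz G K0 \<rho> p0 by (intro mult_mono[of "G * \<phi> j"]) auto
      then show ?thesis using b by linarith
    qed
    then have "K0 * \<rho> ^ (N - Suc j) * \<tau> ^ Suc j * \<beta> j \<le>
        K0 * \<rho> ^ (N - Suc j) * \<tau> ^ Suc j * (G * (2 * K0 * \<rho> ^ j * \<phi> 0) * (Z * (\<rho> powr \<alpha>) ^ j))"
      using K0 \<rho> \<tau> by (intro mult_left_mono) auto
    also have "\<dots> = 2 * K0 * K0 * G * Z * \<tau> * \<phi> 0 * (\<rho> ^ (N - Suc j) * \<rho> ^ j) * (\<tau> ^ j * (\<rho> powr \<alpha>) ^ j)"
      by (simp add: algebra_simps)
    also have "\<rho> ^ (N - Suc j) * \<rho> ^ j = \<rho> ^ (N - 1)"
      using j by (simp add: power_add[symmetric])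
    also have "\<tau> ^ j * (\<rho> powr \<alpha>) ^ j = q ^ j" unfolding q_def by (simp add: power_mult_distrib)
    finally show ?thesis by simp
  qed
  show ?case
  proof (cases N)
    case 0
    then show ?thesis using rec[of 0] K0 p0 by simp
  next
    case (Suc N')
    let ?P = "2 * K0 * K0 * G * Z * \<tau> * \<phi> 0 * \<rho> ^ (N - 1)"
    have P0: "?P \<ge> 0" using K0 G Z0 \<tau> p0 \<rho> by simp
    have "(\<Sum>j<N. K0 * \<rho> ^ (N - Suc j) * \<tau> ^ Suc j * \<beta> j) \<le> (\<Sum>j<N. ?P * q ^ j)"
      by (rule sum_mono) (use tm in auto)
    also have "\<dots> = ?P * (\<Sum>j<N. q ^ j)" by (simp add: sum_distrib_left)
    also have "\<dots> \<le> ?P * (1 / (1 - q))" by (rule mult_left_mono[OF geom_le[OF q0] P0])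
    also have "\<dots> = (2 * K0 * G * \<tau> / (1 - q) * Z) * (K0 * \<phi> 0 * \<rho> ^ (N - 1))" by simp
    also have "\<dots> \<le> \<rho> * (K0 * \<phi> 0 * \<rho> ^ (N - 1))"
      by (rule mult_right_mono) (use s2 K0 p0 \<rho> in \<open>auto simp: q_def Z_def\<close>)
    also have "\<dots> = K0 * \<rho> ^ N * \<phi> 0" using Suc by simp
    finally have "(\<Sum>j<N. K0 * \<rho> ^ (N - Suc j) * \<tau> ^ Suc j * \<beta> j) \<le> K0 * \<rho> ^ N * \<phi> 0" .
    then show ?thesis using rec[of N] by simp
  qed
qed


lemma choose_eps:
  fixes \<gamma> \<alpha> :: real assumes "0 < \<gamma>" "\<gamma> < 1" "0 < \<alpha>" "\<alpha> \<le> 1"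
  shows "\<exists>\<epsilon>>0. \<gamma> * exp \<epsilon> < 1 \<and> exp (2 * \<epsilon>) * (\<gamma> * exp \<epsilon>) powr \<alpha> < 1"
proof -
  define g where "g = ln \<gamma>"
  have g: "g < 0" unfolding g_def using assms by simp
  define \<epsilon> where "\<epsilon> = - \<alpha> * g / 4"
  have e: "\<epsilon> > 0" unfolding \<epsilon>_def using g assms by (simp add: zero_less_mult_iff mult_less_0_iff)
  have ge: "\<gamma> * exp \<epsilon> = exp (g + \<epsilon>)" unfolding g_def using assms by (simp add: exp_add)
  have "g + \<epsilon> = g * (1 - \<alpha> / 4)" unfolding \<epsilon>_def by (simp add: algebra_simps)
  moreover have "1 - \<alpha> / 4 > 0" using assms by simp
  ultimately have ge0: "g + \<epsilon> < 0" using g by (simp add: mult_neg_pos)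
  have 1: "\<gamma> * exp \<epsilon> < 1" using ge ge0 by simp
  have "exp (2 * \<epsilon>) * (\<gamma> * exp \<epsilon>) powr \<alpha> = exp (2 * \<epsilon> + \<alpha> * (g + \<epsilon>))"
  proof -
    have "(exp (g + \<epsilon>)) powr \<alpha> = exp (\<alpha> * (g + \<epsilon>))" by (simp add: powr_def mult.commute del: exp_add)
    then show ?thesis unfolding ge by (simp add: exp_add[symmetric] del: exp_add)
  qed
  moreover have "2 * \<epsilon> + \<alpha> * (g + \<epsilon>) < 0"
  proof -
    have "\<alpha> * \<epsilon> \<le> \<epsilon>" using assms e by (simp add: mult_le_cancel_right1)
    then have "2 * \<epsilon> + \<alpha> * (g + \<epsilon>) \<le> 3 * \<epsilon> + \<alpha> * g" by (simp add: algebra_simps)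
    also have "\<dots> = \<alpha> * g / 4" unfolding \<epsilon>_def by (simp add: algebra_simps)
    also have "\<dots> < 0" using assms g by (simp add: mult_pos_neg)
    finally show ?thesis .
  qed
  ultimately have 2: "exp (2 * \<epsilon>) * (\<gamma> * exp \<epsilon>) powr \<alpha> < 1" by simp
  show ?thesis using e 1 2 by blast
qed

lemma choose_small:
  fixes Q \<rho> \<alpha> c K0 :: real assumes "Q \<ge> 0" "\<rho> > 0" "0 < \<alpha>" "c > 0" "K0 > 0"
  shows "\<exists>r>0. \<forall>p. 0 \<le> p \<and> p \<le> r \<longrightarrow> 2 * c * K0 * p \<le> 1 \<and> Q * (2 * c * K0 * p) powr \<alpha> \<le> \<rho>"
proof -
  define \<theta> where "\<theta> = min 1 (\<rho> / (Q + 1))"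
  have th: "0 < \<theta>" "\<theta> \<le> 1" "\<theta> \<le> \<rho> / (Q + 1)" unfolding \<theta>_def using assms by auto
  define s where "s = \<theta> powr (1 / \<alpha>)"
  have s: "0 < s" "s \<le> 1" unfolding s_def using th assms powr_mono2[of "1/\<alpha>" \<theta> 1] by auto
  have ss: "s powr \<alpha> = \<theta>" unfolding s_def using th assms by (simp add: powr_powr)
  define r where "r = s / (2 * c * K0)"
  have r: "r > 0" unfolding r_def using s assms by simp
  have "2 * c * K0 * p \<le> 1 \<and> Q * (2 * c * K0 * p) powr \<alpha> \<le> \<rho>" if p: "0 \<le> p" "p \<le> r" for p
  proof -
    have X: "2 * c * K0 * p \<le> s" using p assms unfolding r_def by (simp add: field_simps)
    have X0: "0 \<le> 2 * c * K0 * p" using p assms by simp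
    have "(2 * c * K0 * p) powr \<alpha> \<le> s powr \<alpha>" by (rule powr_mono2) (use assms X X0 in auto)
    then have "(2 * c * K0 * p) powr \<alpha> \<le> \<theta>" using ss by simp
    then have "Q * (2 * c * K0 * p) powr \<alpha> \<le> Q * \<theta>" using assms by (simp add: mult_left_mono)
    also have "\<dots> \<le> Q * (\<rho> / (Q + 1))" by (rule mult_left_mono) (use th assms in auto)
    also have "\<dots> \<le> \<rho>" using assms by (simp add: field_simps)
    finally show ?thesis using X s by simp
  qed
  then show ?thesis using r by blast
qed


context setting begin

lemma cocycle: "j \<le> N \<Longrightarrow> D 1 (xs N) (D (real (N - j)) (xs j) v) = D (real (Suc N - j)) (xs j) v"
proof -
  assume j: "j \<le> N"
  have r: "real (Suc N - j) = 1 + real (N - j)" using j by (simp add: Suc_diff_le)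
  have x: "\<Phi> (real (N - j)) (xs j) = xs N" using xs_add[of j "N - j"] j by simp
  show ?thesis using chain[of 1 "real (N - j)" "xs j" v] r x by simp
qed

lemma xs_Suc: "xs (Suc n) = \<Phi> 1 (xs n)" using xs_add[of n 1] by simp

lemma dyn_core:
  fixes y :: 'a
  assumes dF: "\<delta>F > 0" "\<forall>z\<in>K. \<forall>f\<in>F z. \<forall>c\<in>C. \<delta>F * norm f \<le> norm (f - c)"
    and dE: "\<delta>E > 0" "\<forall>z\<in>K. \<forall>e\<in>E z. \<forall>u. norm u < \<delta>E * norm e \<longrightarrow> e + u \<in> C"
    and H: "H \<ge> 0" "\<forall>z\<in>K. \<forall>u. norm u \<le> 1 \<longrightarrow> norm (\<Phi> 1 (z + u) - \<Phi> 1 z - D 1 z u) \<le> H * norm u * norm u powr \<alpha>"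
    and KBe: "\<forall>j m. \<forall>f\<in>F (xs j). norm (D (real m) (xs j) f) \<le> K0 * \<rho> ^ m * exp (2 * \<epsilon> * real j) * norm f"
    and \<rho>: "0 < \<rho>" "\<rho> < 1" and q: "exp (2 * \<epsilon>) * \<rho> powr \<alpha> < 1" and K0: "K0 \<ge> 1"
    and cdef: "c = 1 + 1 / \<delta>E" and Gdef: "G = H * c / \<delta>F"
    and r: "\<forall>p. 0 \<le> p \<and> p \<le> r \<longrightarrow> 2 * c * K0 * p \<le> 1 \<and>
              (2 * K0 * G * exp (2 * \<epsilon>) / (1 - exp (2 * \<epsilon>) * \<rho> powr \<alpha>)) * (2 * c * K0 * p) powr \<alpha> \<le> \<rho>"
    and y: "norm (y - x) \<le> \<delta>F * r"
    and nC: "\<forall>n. \<Phi> (real n) y - xs n \<notin> C"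
  shows "(\<lambda>n. norm (\<Phi> (real n) y - xs n)) \<longlonglongrightarrow> 0"
proof -
  define w where "w n = \<Phi> (real n) y - xs n" for n
  have c0: "c > 0" using cdef dE by (simp add: add_pos_nonneg)
  have G0: "G \<ge> 0" using Gdef H c0 dF by simp
  have wS: "w (Suc n) = \<Phi> 1 (xs n + w n) - \<Phi> 1 (xs n)" for n
  proof -
    have "\<Phi> (real (Suc n)) y = \<Phi> 1 (\<Phi> (real n) y)" using flow_add[of 1 "real n" y] by (simp add: add.commute)
    then show ?thesis unfolding w_def using xs_Suc[of n] by simp
  qed
  have w0: "w 0 = y - x" unfolding w_def xs_def by (simp add: flow0)
  have "\<forall>n. \<exists>p. fst p \<in> E (xs n) \<and> snd p \<in> F (xs n) \<and> w n = fst p + snd p"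
  proof
    fix n
    obtain e f where "e \<in> E (xs n)" "f \<in> F (xs n)" "w n = e + f" using decomp[OF xsK] by blast
    then show "\<exists>p. fst p \<in> E (xs n) \<and> snd p \<in> F (xs n) \<and> w n = fst p + snd p"
      by (intro exI[of _ "(e, f)"]) simp
  qed
  then have "\<exists>pp. \<forall>n. fst (pp n) \<in> E (xs n) \<and> snd (pp n) \<in> F (xs n) \<and> w n = fst (pp n) + snd (pp n)"
    by (rule choice)
  then obtain pp where pp: "\<forall>n. fst (pp n) \<in> E (xs n) \<and> snd (pp n) \<in> F (xs n) \<and> w n = fst (pp n) + snd (pp n)"
    by blast
  define ee where "ee n = fst (pp n)" for n
  define ff where "ff n = snd (pp n)" for n
  have eeE: "ee n \<in> E (xs n)" and ffF: "ff n \<in> F (xs n)" and wef: "w n = ee n + ff n" for n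
    using pp unfolding ee_def ff_def by auto
  define R where "R n = w (Suc n) - D 1 (xs n) (w n)" for n
  have "\<forall>n. \<exists>p. fst p \<in> E (xs (Suc n)) \<and> snd p \<in> F (xs (Suc n)) \<and> R n = fst p + snd p"
  proof
    fix n
    obtain e f where "e \<in> E (xs (Suc n))" "f \<in> F (xs (Suc n))" "R n = e + f" using decomp[OF xsK] by blast
    then show "\<exists>p. fst p \<in> E (xs (Suc n)) \<and> snd p \<in> F (xs (Suc n)) \<and> R n = fst p + snd p"
      by (intro exI[of _ "(e, f)"]) simp
  qed
  then have "\<exists>pp. \<forall>n. fst (pp n) \<in> E (xs (Suc n)) \<and> snd (pp n) \<in> F (xs (Suc n)) \<and> R n = fst (pp n) + snd (pp n)"
    by (rule choice)
  then obtain qq where qq: "\<forall>n. fst (qq n) \<in> E (xs (Suc n)) \<and> snd (qq n) \<in> F (xs (Suc n)) \<and> R n = fst (qq n) + snd (qq n)"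
    by blast
  define aa where "aa n = fst (qq n)" for n
  define bb where "bb n = snd (qq n)" for n
  have aaE: "aa n \<in> E (xs (Suc n))" and bbF: "bb n \<in> F (xs (Suc n))" and Rab: "R n = aa n + bb n" for n
    using qq unfolding aa_def bb_def by auto
  have ffS: "ff (Suc n) = D 1 (xs n) (ff n) + bb n" for n
  proof -
    have "ee (Suc n) + ff (Suc n) = w (Suc n)" using wef by simp
    also have "\<dots> = D 1 (xs n) (w n) + R n" unfolding R_def by simp
    also have "\<dots> = (D 1 (xs n) (ee n) + aa n) + (D 1 (xs n) (ff n) + bb n)"
      using wef[of n] Rab[of n] linear_add[OF lin] by (simp add: algebra_simps)
    finally have eq: "ee (Suc n) + ff (Suc n) = (D 1 (xs n) (ee n) + aa n) + (D 1 (xs n) (ff n) + bb n)" .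
    have "D 1 (xs n) (ee n) \<in> E (xs (Suc n))" unfolding xs_Suc by (rule invE[OF xsK _ eeE]) simp
    then have e2: "D 1 (xs n) (ee n) + aa n \<in> E (xs (Suc n))" using E_sub[OF xsK] aaE subspace_add by blast
    have "D 1 (xs n) (ff n) \<in> F (xs (Suc n))" unfolding xs_Suc by (rule invF[OF xsK _ ffF]) simp
    then have f2: "D 1 (xs n) (ff n) + bb n \<in> F (xs (Suc n))" using F_sub[OF xsK] bbF subspace_add by blast
    show ?thesis using decomp_unique[OF xsK eeE e2 ffF f2 eq] by simp
  qed
  have vc: "ff N = D (real N) (xs 0) (ff 0) + (\<Sum>j<N. D (real (N - Suc j)) (xs (Suc j)) (bb j))" for N
  proof (induction N)
    case 0 then show ?case by (simp add: D0)
  next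
    case (Suc N)
    have "ff (Suc N) = D 1 (xs N) (ff N) + bb N" by (rule ffS)
    also have "D 1 (xs N) (ff N) = D 1 (xs N) (D (real N) (xs 0) (ff 0))
        + (\<Sum>j<N. D 1 (xs N) (D (real (N - Suc j)) (xs (Suc j)) (bb j)))"
      unfolding Suc.IH using linear_add[OF lin] linear_sum[OF lin] by simp
    also have "D 1 (xs N) (D (real N) (xs 0) (ff 0)) = D (real (Suc N)) (xs 0) (ff 0)"
      using cocycle[of 0 N "ff 0"] by simp
    also have "(\<Sum>j<N. D 1 (xs N) (D (real (N - Suc j)) (xs (Suc j)) (bb j)))
        = (\<Sum>j<N. D (real (Suc N - Suc j)) (xs (Suc j)) (bb j))"
    proof (rule sum.cong[OF refl])
      fix j assume "j \<in> {..<N}"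
      then have "Suc j \<le> N" by simp
      then show "D 1 (xs N) (D (real (N - Suc j)) (xs (Suc j)) (bb j)) = D (real (Suc N - Suc j)) (xs (Suc j)) (bb j)"
        by (rule cocycle)
    qed
    also have "bb N = D (real (Suc N - Suc N)) (xs (Suc N)) (bb N)" by (simp add: D0)
    finally show ?case by (simp add: algebra_simps)
  qed
  define \<tau> where "\<tau> = exp (2 * \<epsilon>)"
  have tau_pow: "exp (2 * \<epsilon> * real j) = \<tau> ^ j" for j
    unfolding \<tau>_def using exp_of_nat_mult[of j "2 * \<epsilon>"] by (simp add: mult.commute)
  have rec: "norm (ff N) \<le> K0 * \<rho> ^ N * norm (ff 0) + (\<Sum>j<N. K0 * \<rho> ^ (N - Suc j) * \<tau> ^ Suc j * norm (bb j))" for N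
  proof -
    have "norm (ff N) \<le> norm (D (real N) (xs 0) (ff 0)) + norm (\<Sum>j<N. D (real (N - Suc j)) (xs (Suc j)) (bb j))"
      unfolding vc[of N] by (rule norm_triangle_ineq)
    also have "norm (\<Sum>j<N. D (real (N - Suc j)) (xs (Suc j)) (bb j)) \<le> (\<Sum>j<N. norm (D (real (N - Suc j)) (xs (Suc j)) (bb j)))"
      by (rule norm_sum)
    also have "\<dots> \<le> (\<Sum>j<N. K0 * \<rho> ^ (N - Suc j) * \<tau> ^ Suc j * norm (bb j))"
    proof (rule sum_mono)
      fix j
      show "norm (D (real (N - Suc j)) (xs (Suc j)) (bb j)) \<le> K0 * \<rho> ^ (N - Suc j) * \<tau> ^ Suc j * norm (bb j)"
      proof -
        have "norm (D (real (N - Suc j)) (xs (Suc j)) (bb j)) \<le> K0 * \<rho> ^ (N - Suc j) * exp (2 * \<epsilon> * real (Suc j)) * norm (bb j)"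
          using KBe bbF[of j] by blast
        then show ?thesis unfolding tau_pow .
      qed
    qed
    also have "norm (D (real N) (xs 0) (ff 0)) \<le> K0 * \<rho> ^ N * norm (ff 0)"
    proof -
      have "norm (D (real N) (xs 0) (ff 0)) \<le> K0 * \<rho> ^ N * exp (2 * \<epsilon> * real 0) * norm (ff 0)"
        using KBe ffF[of 0] by blast
      then show ?thesis by simp
    qed
    finally show ?thesis by simp
  qed
  have wf: "norm (w n) \<le> c * norm (ff n)" for n
  proof -
    have "w n \<notin> C" using nC unfolding w_def by blast
    moreover have "norm (ff n) < \<delta>E * norm (ee n) \<longrightarrow> ee n + ff n \<in> C"
      using dE(2) xsK[of n] eeE[of n] by blast
    ultimately have "\<not> norm (ff n) < \<delta>E * norm (ee n)" using wef[of n] by auto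
    then have "\<delta>E * norm (ee n) \<le> norm (ff n)" by simp
    then have "norm (ee n) \<le> norm (ff n) / \<delta>E" using dE(1) by (simp add: field_simps)
    moreover have "norm (w n) \<le> norm (ee n) + norm (ff n)" unfolding wef by (rule norm_triangle_ineq)
    ultimately have "norm (w n) \<le> norm (ff n) / \<delta>E + norm (ff n)" by linarith
    also have "\<dots> = c * norm (ff n)" unfolding cdef by (simp add: algebra_simps)
    finally show ?thesis .
  qed
  have bbound: "norm (bb j) \<le> G * norm (ff j) * (c * norm (ff j)) powr \<alpha>" if small: "c * norm (ff j) \<le> 1" for j
  proof -
    have w1: "norm (w j) \<le> 1" using wf[of j] small by linarith
    have "R j = \<Phi> 1 (xs j + w j) - \<Phi> 1 (xs j) - D 1 (xs j) (w j)" unfolding R_def wS by simp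
    then have Rb: "norm (R j) \<le> H * norm (w j) * norm (w j) powr \<alpha>" using H(2) xsK w1 by simp
    have "- aa j \<in> C" using E_sub_C[OF xsK aaE] C_neg by blast
    then have "\<delta>F * norm (bb j) \<le> norm (bb j - - aa j)" using dF(2) xsK bbF by blast
    also have "bb j - - aa j = R j" unfolding Rab by simp
    finally have "\<delta>F * norm (bb j) \<le> norm (R j)" .
    also have "\<dots> \<le> H * norm (w j) * norm (w j) powr \<alpha>" by (rule Rb)
    also have "\<dots> \<le> H * (c * norm (ff j)) * (c * norm (ff j)) powr \<alpha>"
    proof -
      have p: "norm (w j) powr \<alpha> \<le> (c * norm (ff j)) powr \<alpha>"
        by (rule powr_mono2) (use alpha wf in auto)
      have "H * norm (w j) \<le> H * (c * norm (ff j))" by (rule mult_left_mono[OF wf H(1)])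
      moreover have "0 \<le> H * (c * norm (ff j))" using H(1) c0 by simp
      ultimately show ?thesis using p by (intro mult_mono[of "H * norm (w j)"]) auto
    qed
    finally have "\<delta>F * norm (bb j) \<le> H * (c * norm (ff j)) * (c * norm (ff j)) powr \<alpha>" .
    then show ?thesis unfolding Gdef using dF(1) by (simp add: field_simps)
  qed
  have f0: "norm (ff 0) \<le> r"
  proof -
    have "- ee 0 \<in> C" using E_sub_C[OF xsK eeE] C_neg by blast
    then have "\<delta>F * norm (ff 0) \<le> norm (ff 0 - - ee 0)" using dF(2) xsK ffF by blast
    also have "ff 0 - - ee 0 = y - x" using wef[of 0] w0 by (simp add: algebra_simps)
    finally have "\<delta>F * norm (ff 0) \<le> \<delta>F * r" using y by linarith
    then show ?thesis using dF(1) by simp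
  qed
  have sm: "2 * c * K0 * norm (ff 0) \<le> 1 \<and>
      (2 * K0 * G * \<tau> / (1 - \<tau> * \<rho> powr \<alpha>)) * (2 * c * K0 * norm (ff 0)) powr \<alpha> \<le> \<rho>"
    using r f0 unfolding \<tau>_def by simp
  have est: "norm (ff N) \<le> 2 * K0 * \<rho> ^ N * norm (ff 0)" for N
  proof (rule seq_est[where \<beta> = "\<lambda>j. norm (bb j)" and \<tau> = \<tau> and \<alpha> = \<alpha> and G = G and c = c])
    show "\<tau> > 0" unfolding \<tau>_def by simp
    show "\<tau> * \<rho> powr \<alpha> < 1" using q unfolding \<tau>_def .
  qed (use \<rho> alpha K0 G0 c0 rec bbound sm in auto)
  have lim: "(\<lambda>n. c * (2 * K0 * \<rho> ^ n * norm (ff 0))) \<longlonglongrightarrow> 0"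
  proof -
    have "(\<lambda>n. \<rho> ^ n) \<longlonglongrightarrow> 0" using \<rho> by (intro LIMSEQ_power_zero) auto
    then have "(\<lambda>n. (c * 2 * K0 * norm (ff 0)) * \<rho> ^ n) \<longlonglongrightarrow> (c * 2 * K0 * norm (ff 0)) * 0"
      by (intro tendsto_mult tendsto_const)
    then show ?thesis by (simp add: algebra_simps)
  qed
  have "(\<lambda>n. norm (w n)) \<longlonglongrightarrow> 0"
  proof (rule tendsto_sandwich[OF _ _ tendsto_const lim])
    show "eventually (\<lambda>n. 0 \<le> norm (w n)) sequentially" by simp
    have "norm (w n) \<le> c * (2 * K0 * \<rho> ^ n * norm (ff 0))" for n
      using wf[of n] est[of n] c0 by (meson mult_left_mono less_imp_le order.trans)
    then show "eventually (\<lambda>n. norm (w n) \<le> c * (2 * K0 * \<rho> ^ n * norm (ff 0))) sequentially" by simp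
  qed
  then show ?thesis unfolding w_def .
qed

end


context setting begin

lemma conv_disc: "\<exists>\<eta>>0. \<forall>y. norm (y - x) < \<eta> \<longrightarrow> (\<forall>n. \<Phi> (real n) y - xs n \<notin> C) \<longrightarrow>
    (\<lambda>n. norm (\<Phi> (real n) y - xs n)) \<longlonglongrightarrow> 0"
proof -
  obtain \<delta>F where dF: "\<delta>F > 0" "\<forall>z\<in>K. \<forall>f\<in>F z. \<forall>c\<in>C. \<delta>F * norm f \<le> norm (f - c)"
    using deltaF by blast
  obtain \<delta>E where dE: "\<delta>E > 0" "\<forall>z\<in>K. \<forall>e\<in>E z. \<forall>u. norm u < \<delta>E * norm e \<longrightarrow> e + u \<in> C"
    using deltaE by blast
  obtain H where H: "H \<ge> 0" "\<forall>z\<in>K. \<forall>u. norm u \<le> 1 \<longrightarrow> norm (\<Phi> 1 (z + u) - \<Phi> 1 z - D 1 z u) \<le> H * norm u * norm u powr \<alpha>"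
    using remainder by blast
  obtain \<gamma> where g: "0 < \<gamma>" "\<gamma> < 1" and kb: "\<forall>\<epsilon>>0. \<exists>K0\<ge>1. \<forall>j m. \<forall>f\<in>F (xs j).
    norm (D (real m) (xs j) f) \<le> K0 * (\<gamma> * exp \<epsilon>) ^ m * exp (2 * \<epsilon> * real j) * norm f"
    using KB by blast
  obtain \<epsilon> where e: "\<epsilon> > 0" "\<gamma> * exp \<epsilon> < 1" "exp (2 * \<epsilon>) * (\<gamma> * exp \<epsilon>) powr \<alpha> < 1"
    using choose_eps[OF g alpha] by blast
  obtain K0 where K0: "K0 \<ge> 1" and KBe: "\<forall>j m. \<forall>f\<in>F (xs j).
    norm (D (real m) (xs j) f) \<le> K0 * (\<gamma> * exp \<epsilon>) ^ m * exp (2 * \<epsilon> * real j) * norm f"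
    using kb e(1) by blast
  define \<rho> where "\<rho> = \<gamma> * exp \<epsilon>"
  have \<rho>: "0 < \<rho>" "\<rho> < 1" unfolding \<rho>_def using g e by auto
  define c where "c = 1 + 1 / \<delta>E"
  define G where "G = H * c / \<delta>F"
  have c0: "c > 0" unfolding c_def using dE by (simp add: add_pos_nonneg)
  have G0: "G \<ge> 0" unfolding G_def using H c0 dF by simp
  define Q where "Q = 2 * K0 * G * exp (2 * \<epsilon>) / (1 - exp (2 * \<epsilon>) * \<rho> powr \<alpha>)"
  have Q0: "Q \<ge> 0" unfolding Q_def using e(3) K0 G0 unfolding \<rho>_def by simp
  obtain r where r: "r > 0" "\<forall>p. 0 \<le> p \<and> p \<le> r \<longrightarrow> 2 * c * K0 * p \<le> 1 \<and> Q * (2 * c * K0 * p) powr \<alpha> \<le> \<rho>"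
    using choose_small[OF Q0 \<rho>(1) alpha(1) c0, of K0] K0 by auto
  have "(\<lambda>n. norm (\<Phi> (real n) y - xs n)) \<longlonglongrightarrow> 0"
    if y: "norm (y - x) < \<delta>F * r" and nC: "\<forall>n. \<Phi> (real n) y - xs n \<notin> C" for y
  proof (rule dyn_core[OF dF dE H _ \<rho> _ K0 c_def G_def _ _ nC])
    show "\<forall>j m. \<forall>f\<in>F (xs j). norm (D (real m) (xs j) f) \<le> K0 * \<rho> ^ m * exp (2 * \<epsilon> * real j) * norm f"
      using KBe unfolding \<rho>_def .
    show "exp (2 * \<epsilon>) * \<rho> powr \<alpha> < 1" using e(3) unfolding \<rho>_def .
    show "\<forall>p. 0 \<le> p \<and> p \<le> r \<longrightarrow> 2 * c * K0 * p \<le> 1 \<and>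
              2 * K0 * G * exp (2 * \<epsilon>) / (1 - exp (2 * \<epsilon>) * \<rho> powr \<alpha>) * (2 * c * K0 * p) powr \<alpha> \<le> \<rho>"
      using r(2) unfolding Q_def .
    show "norm (y - x) \<le> \<delta>F * r" using y by simp
  qed
  moreover have "\<delta>F * r > 0" using dF r by simp
  ultimately show ?thesis by blast
qed

lemma conv_cont:
  assumes lim: "(\<lambda>n. norm (\<Phi> (real n) y - xs n)) \<longlonglongrightarrow> 0"
  shows "((\<lambda>t. norm (\<Phi> t x - \<Phi> t y)) \<longlongrightarrow> 0) at_top"
proof (rule tendstoI)
  fix e :: real assume e: "e > 0"
  obtain d where d: "d > 0" "\<forall>s\<in>{0..1}. \<forall>z\<in>K. \<forall>u. norm u < d \<longrightarrow> norm (\<Phi> s (z + u) - \<Phi> s z) < e"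
    using unif_cont[OF e] by blast
  obtain N where N: "\<forall>n\<ge>N. norm (\<Phi> (real n) y - xs n) < d"
    using lim d(1) unfolding LIMSEQ_def by (auto simp: dist_real_def)
  have "dist (norm (\<Phi> t x - \<Phi> t y)) 0 < e" if t: "t \<ge> real N" for t
  proof -
    define n where "n = nat \<lfloor>t\<rfloor>"
    have t0: "t \<ge> 0" using t by (meson of_nat_0_le_iff order.trans)
    have rn: "real n = of_int \<lfloor>t\<rfloor>" unfolding n_def using t0 by simp
    have nt: "real n \<le> t" "t < real n + 1" using rn by linarith+
    have nN: "n \<ge> N"
    proof -
      have "of_int (int N) \<le> t" using t by simp
      then have "int N \<le> \<lfloor>t\<rfloor>" by (simp add: le_floor_iff)
      then show ?thesis unfolding n_def by simp
    qed
    define s where "s = t - real n"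
    have s: "s \<in> {0..1}" unfolding s_def using nt by auto
    define u where "u = \<Phi> (real n) y - xs n"
    have u: "norm u < d" unfolding u_def using N nN by blast
    have ty: "\<Phi> t y = \<Phi> s (xs n + u)" unfolding u_def s_def using flow_add[of "t - real n" "real n" y] by simp
    have tx: "\<Phi> t x = \<Phi> s (xs n)" unfolding s_def xs_def using flow_add[of "t - real n" "real n" x] by simp
    have "norm (\<Phi> s (xs n + u) - \<Phi> s (xs n)) < e" using d(2) s xsK u by blast
    then show ?thesis unfolding tx ty by (simp add: norm_minus_commute)
  qed
  then show "eventually (\<lambda>t. dist (norm (\<Phi> t x - \<Phi> t y)) 0 < e) at_top"
    unfolding eventually_at_top_linorder by blast
qed

lemma main: "\<exists>V. open V \<and> x \<in> V \<and> (\<forall>y\<in>V.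
           ((\<lambda>t. norm (\<Phi> t x - \<Phi> t y)) \<longlongrightarrow> 0) at_top
         \<or> (\<exists>T>0. \<Phi> T x - \<Phi> T y \<in> C \<and> (\<forall>t>T. \<Phi> t x - \<Phi> t y \<in> interior C)))"
proof -
  obtain \<eta> where eta: "\<eta> > 0" "\<forall>y. norm (y - x) < \<eta> \<longrightarrow> (\<forall>n. \<Phi> (real n) y - xs n \<notin> C) \<longrightarrow>
    (\<lambda>n. norm (\<Phi> (real n) y - xs n)) \<longlonglongrightarrow> 0" using conv_disc by blast
  have "((\<lambda>t. norm (\<Phi> t x - \<Phi> t y)) \<longlongrightarrow> 0) at_top
         \<or> (\<exists>T>0. \<Phi> T x - \<Phi> T y \<in> C \<and> (\<forall>t>T. \<Phi> t x - \<Phi> t y \<in> interior C))"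
    if y: "y \<in> ball x \<eta>" for y
  proof (cases "y = x")
    case True then show ?thesis by simp
  next
    case False
    show ?thesis
    proof (cases "\<exists>t\<ge>0. \<Phi> t x - \<Phi> t y \<in> C")
      case True
      then obtain t where t: "t \<ge> 0" "\<Phi> t x - \<Phi> t y \<in> C" by blast
      define T where "T = t + 1"
      have T: "T > 0" unfolding T_def using t by simp
      have TC: "\<Phi> T x - \<Phi> T y \<in> C"
        using mono1[OF t(2), of 1] unfolding T_def by (simp add: flow_add[symmetric] add.commute)
      have neq: "\<Phi> T x \<noteq> \<Phi> T y"
      proof
        assume "\<Phi> T x = \<Phi> T y"
        then have "\<Phi> (-T) (\<Phi> T x) = \<Phi> (-T) (\<Phi> T y)" by simp
        then have "x = y" by (simp add: flow_add[symmetric] flow0)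
        then show False using False by simp
      qed
      have "\<Phi> t' x - \<Phi> t' y \<in> interior C" if t': "t' > T" for t'
      proof -
        have "\<Phi> (t' - T) (\<Phi> T x) - \<Phi> (t' - T) (\<Phi> T y) \<in> interior C"
          by (rule mono2[OF neq TC]) (use t' in simp)
        then show ?thesis by (simp add: flow_add[symmetric])
      qed
      then show ?thesis using T TC by blast
    next
      case False
      have nC: "\<forall>n. \<Phi> (real n) y - xs n \<notin> C"
      proof
        fix n
        show "\<Phi> (real n) y - xs n \<notin> C"
        proof
          assume "\<Phi> (real n) y - xs n \<in> C"
          then have "- (\<Phi> (real n) y - xs n) \<in> C" by (rule C_neg)
          then have "\<Phi> (real n) x - \<Phi> (real n) y \<in> C" unfolding xs_def by simp
          moreover have "real n \<ge> 0" by simp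
          ultimately show False using False by blast
        qed
      qed
      have "norm (y - x) < \<eta>" using y by (simp add: dist_norm norm_minus_commute)
      then have "(\<lambda>n. norm (\<Phi> (real n) y - xs n)) \<longlonglongrightarrow> 0" using eta(2) nC by blast
      then show ?thesis by (intro disjI1 conv_cont)
    qed
  qed
  then have "\<forall>y\<in>ball x \<eta>. ((\<lambda>t. norm (\<Phi> t x - \<Phi> t y)) \<longlongrightarrow> 0) at_top
         \<or> (\<exists>T>0. \<Phi> T x - \<Phi> T y \<in> C \<and> (\<forall>t>T. \<Phi> t x - \<Phi> t y \<in> interior C))" by blast
  moreover have "open (ball x \<eta>)" by simp
  moreover have "x \<in> ball x \<eta>" using eta(1) by simp
  ultimately show ?thesis by (intro exI[of _ "ball x \<eta>"] conjI)
qed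

end

theorem lemma4p1:
  fixes \<Phi> :: "real \<Rightarrow> 'a::euclidean_space \<Rightarrow> 'a"
    and D :: "real \<Rightarrow> 'a \<Rightarrow> 'a \<Rightarrow> 'a"
    and C K :: "'a set" and E F :: "'a \<Rightarrow> 'a set" and x :: 'a
  assumes "FWW \<Phi> D \<alpha> C k"
    and "k \<ge> 1"
    and "compact K" and "invariant_set \<Phi> K"
    and "exp_separation \<Phi> D C k K E F"
    and "x \<in> K" and "lyap_regular D E x" and "k_lyapunov D E x \<le> 0"
  shows "\<exists>V. open V \<and> x \<in> V \<and> (\<forall>y\<in>V.
           ((\<lambda>t. norm (\<Phi> t x - \<Phi> t y)) \<longlongrightarrow> 0) at_top
         \<or> (\<exists>T>0. \<Phi> T x - \<Phi> T y \<in> C \<and> (\<forall>t>T. \<Phi> t x - \<Phi> t y \<in> interior C)))"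
proof -
  interpret s: setting \<Phi> D \<alpha> C K E F k x
    using assms by (rule setting.intro)
  show ?thesis by (rule s.main)
qed


end
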